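(* Let $m<n$ be integers with $m\ge -1$ even, and let $p\in\Gamma_n$. Suppose $p\hat a=bqa$ for paths $\hat a,a,b$ and $q\in\Gamma_m$ (so that $q$ occurs in the path $p\hat a$, in which $p$ occurs as a suffix). Then $b\notin I$ if and only if the occurrence of $q$ lies inside $\sigma_{m+1}(p)$. In particular, in that case $q$ lies inside $p$. Dually, if $\hat b p=bqa$ with $q\in\Gamma_m$, then $a\notin I$ if and only if the occurrence of $q$ lies inside $\pi_{m+1}(p)$.
   Context: Let $\Bbbk$ be a field, $Q=(Q_0,Q_1,s,t)$ a finite quiver, and $A=\Bbbk Q/I$ a finite-dimensional monomial algebra, i.e. $I$ is an ideal generated by paths of length at least $2$. Paths are written from right to left: a path is $p=\alpha_n\cdots\alpha_1$ with arrows $\alpha_i$ and $t(\alpha_i)=s(\alpha_{i+1})$; vertices are the paths of length $0$ (trivial paths, also denoted $1$); $qp$ denotes concatenation when $t(p)=s(q)$. Let $\mathcal B$ be the set of paths not lying in $I$. If $p=bqa$ for paths $a,b,q$, then $q$ is a divisor of $p$; we write $q\le p$ to mean that $q$ is a divisor of $p$ at a fixed position (an occurrence). If $b$ is trivial, $q$ is a suffix; if $a$ is trivial, $q$ is a prefix; proper means $q\neq p$. For $n\ge -1$, a left $n$-ambiguity is a path $p$ with a decomposition $p=u_{-1}u_0u_1\cdots u_n$ such that $u_{-1}\in Q_0$, $u_0\in Q_1$, $u_i\in\mathcal B$ for all $i$, and for every $0\le i\le n-1$, $u_iu_{i+1}\in I$ while no proper suffix of $u_iu_{i+1}$ lies in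 $I$ (one writes $p=u_0\cdots u_n$). A right $n$-ambiguity is a path with a decomposition $p=v_n\cdots v_0v_{-1}$ with $v_{-1}\in Q_0$, $v_0\in Q_1$, $v_i\in\mathcal B$, and for $0\le i\le n-1$, $v_{i+1}v_i\in I$ while no proper prefix of $v_{i+1}v_i$ lies in $I$. A path is a left $n$-ambiguity iff it is a right $n$-ambiguity; such paths are called $n$-ambiguities, and $\Gamma_n$ denotes their set. Both decompositions of an $n$-ambiguity are unique. For $p\in\Gamma_n$ with left decomposition $u_0\cdots u_n$ and right decomposition $v_n\cdots v_0$, and $-1\le m\le n$, set $\sigma_m(p):=u_0\cdots u_m$ (a suffix of $p$ which is an $m$-ambiguity) and $\pi_m(p):=v_m\cdots v_0$ (a prefix of $p$ which is an $m$-ambiguity). *)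

theory Defs
  imports Main
begin

record ('v, 'a) quiver =
  verts :: "'v set"
  arrs  :: "'a set"
  srcA  :: "'a \<Rightarrow> 'v"
  tgtA  :: "'a \<Rightarrow> 'v"

text \<open>A path is a pair (source vertex, list of arrows in WRITTEN order).
  The path alpha_n ... alpha_1 (alpha_1 traversed first) is represented as
  (s(alpha_1), [alpha_n, ..., alpha_1]); the trivial path at v is (v, []).\<close>
type_synonym ('v, 'a) path = "'v \<times> 'a list"

definition len :: "('v, 'a) path \<Rightarrow> nat" where
  "len w = length (snd w)"

definition psrc :: "('v, 'a) path \<Rightarrow> 'v" where
  "psrc w = fst w"

definition ptgt :: "('v, 'a) quiver \<Rightarrow> ('v, 'a) path \<Rightarrow> 'v" where
  "ptgt Q w = (if snd w = [] then fst w else tgtA Q (hd (snd w)))"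

definition valid :: "('v, 'a) quiver \<Rightarrow> ('v, 'a) path \<Rightarrow> bool" where
  "valid Q w \<longleftrightarrow> fst w \<in> verts Q \<and> set (snd w) \<subseteq> arrs Q
     \<and> (snd w \<noteq> [] \<longrightarrow> srcA Q (last (snd w)) = fst w)
     \<and> (\<forall>i. Suc i < length (snd w) \<longrightarrow> srcA Q (snd w ! i) = tgtA Q (snd w ! Suc i))"

text \<open>Concatenation q p (p first, then q), meaningful when t(p) = s(q).\<close>
definition cat :: "('v, 'a) path \<Rightarrow> ('v, 'a) path \<Rightarrow> ('v, 'a) path" where
  "cat q p = (fst p, snd q @ snd p)"

definition composable :: "('v, 'a) quiver \<Rightarrow> ('v, 'a) path \<Rightarrow> ('v, 'a) path \<Rightarrow> bool" where
  "composable Q q p \<longleftrightarrow> valid Q q \<and> valid Q p \<and> ptgt Q p = psrc q"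

definition divisor :: "('v, 'a) quiver \<Rightarrow> ('v, 'a) path \<Rightarrow> ('v, 'a) path \<Rightarrow> bool" where
  "divisor Q q w \<longleftrightarrow> (\<exists>b a. composable Q q a \<and> composable Q b (cat q a) \<and> w = cat b (cat q a))"

definition is_suffix :: "('v, 'a) quiver \<Rightarrow> ('v, 'a) path \<Rightarrow> ('v, 'a) path \<Rightarrow> bool" where
  "is_suffix Q r w \<longleftrightarrow> (\<exists>a. composable Q r a \<and> w = cat r a)"

definition is_prefix :: "('v, 'a) quiver \<Rightarrow> ('v, 'a) path \<Rightarrow> ('v, 'a) path \<Rightarrow> bool" where
  "is_prefix Q r w \<longleftrightarrow> (\<exists>b. composable Q b r \<and> w = cat b r)"

text \<open>The monomial ideal I generated by the set of paths R: a path lies in I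
  iff it has a divisor in R.\<close>
definition inI :: "('v, 'a) quiver \<Rightarrow> ('v, 'a) path set \<Rightarrow> ('v, 'a) path \<Rightarrow> bool" where
  "inI Q R w \<longleftrightarrow> (\<exists>r\<in>R. divisor Q r w)"

definition Bpaths :: "('v, 'a) quiver \<Rightarrow> ('v, 'a) path set \<Rightarrow> ('v, 'a) path set" where
  "Bpaths Q R = {w. valid Q w \<and> \<not> inI Q R w}"

text \<open>Standing assumptions: finite quiver, I generated by paths of length at
  least 2, A = kQ/I finite-dimensional (finitely many paths outside I).\<close>
definition monomial_algebra :: "('v, 'a) quiver \<Rightarrow> ('v, 'a) path set \<Rightarrow> bool" where
  "monomial_algebra Q R \<longleftrightarrow> finite (verts Q) \<and> finite (arrs Q)
     \<and> (\<forall>\<alpha>\<in>arrs Q. srcA Q \<alpha> \<in> verts Q \<and> tgtA Q \<alpha> \<in> verts Q)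
     \<and> (\<forall>r\<in>R. valid Q r \<and> len r \<ge> 2)
     \<and> finite (Bpaths Q R)"

text \<open>Left n-ambiguity with left decomposition us = [u_{-1}, u_0, ..., u_n]
  (written order, p = u_{-1} u_0 ... u_n).\<close>
definition left_decomp :: "('v, 'a) quiver \<Rightarrow> ('v, 'a) path set \<Rightarrow> int \<Rightarrow>
    ('v, 'a) path \<Rightarrow> ('v, 'a) path list \<Rightarrow> bool" where
  "left_decomp Q R n p us \<longleftrightarrow> n \<ge> -1 \<and> length us = nat (n + 2)
     \<and> valid Q p
     \<and> snd p = concat (map snd us) \<and> psrc p = psrc (last us)
     \<and> (\<forall>j. Suc j < length us \<longrightarrow> composable Q (us ! j) (us ! Suc j))
     \<and> len (us ! 0) = 0 \<and> (length us > 1 \<longrightarrow> len (us ! 1) = 1)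
     \<and> (\<forall>j < length us. us ! j \<in> Bpaths Q R)
     \<and> (\<forall>i. i + 2 < length us \<longrightarrow>
          inI Q R (cat (us ! Suc i) (us ! Suc (Suc i)))
          \<and> (\<forall>r. is_suffix Q r (cat (us ! Suc i) (us ! Suc (Suc i)))
                 \<and> r \<noteq> cat (us ! Suc i) (us ! Suc (Suc i)) \<longrightarrow> \<not> inI Q R r))"

text \<open>Right n-ambiguity with right decomposition vs = [v_{-1}, v_0, ..., v_n]
  (p = v_n ... v_0 v_{-1} in written order).\<close>
definition right_decomp :: "('v, 'a) quiver \<Rightarrow> ('v, 'a) path set \<Rightarrow> int \<Rightarrow>
    ('v, 'a) path \<Rightarrow> ('v, 'a) path list \<Rightarrow> bool" where
  "right_decomp Q R n p vs \<longleftrightarrow> n \<ge> -1 \<and> length vs = nat (n + 2)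
     \<and> valid Q p
     \<and> snd p = concat (map snd (rev vs)) \<and> psrc p = psrc (vs ! 0)
     \<and> (\<forall>j. Suc j < length vs \<longrightarrow> composable Q (vs ! Suc j) (vs ! j))
     \<and> len (vs ! 0) = 0 \<and> (length vs > 1 \<longrightarrow> len (vs ! 1) = 1)
     \<and> (\<forall>j < length vs. vs ! j \<in> Bpaths Q R)
     \<and> (\<forall>i. i + 2 < length vs \<longrightarrow>
          inI Q R (cat (vs ! Suc (Suc i)) (vs ! Suc i))
          \<and> (\<forall>r. is_prefix Q r (cat (vs ! Suc (Suc i)) (vs ! Suc i))
                 \<and> r \<noteq> cat (vs ! Suc (Suc i)) (vs ! Suc i) \<longrightarrow> \<not> inI Q R r))"

definition Gamma :: "('v, 'a) quiver \<Rightarrow> ('v, 'a) path set \<Rightarrow> int \<Rightarrow> ('v, 'a) path set" where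
  "Gamma Q R n = {p. \<exists>us. left_decomp Q R n p us}"

text \<open>sigma_m(p) = u_0 ... u_m (u_{-1} for m = -1), a suffix of p.\<close>
definition sigma :: "('v, 'a) quiver \<Rightarrow> ('v, 'a) path set \<Rightarrow> int \<Rightarrow> int \<Rightarrow>
    ('v, 'a) path \<Rightarrow> ('v, 'a) path" where
  "sigma Q R n m p = (let us = (THE us. left_decomp Q R n p us);
                          ws = take (nat (m + 2)) us
                      in (psrc (last ws), concat (map snd ws)))"

text \<open>pi_m(p) = v_m ... v_0 (v_{-1} for m = -1), a prefix of p.\<close>
definition pi_amb :: "('v, 'a) quiver \<Rightarrow> ('v, 'a) path set \<Rightarrow> int \<Rightarrow> int \<Rightarrow>
    ('v, 'a) path \<Rightarrow> ('v, 'a) path" where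
  "pi_amb Q R n m p = (let vs = (THE vs. right_decomp Q R n p vs);
                           ws = take (nat (m + 2)) vs
                       in (psrc p, concat (map snd (rev ws))))"

text \<open>Positional containment of occurrences inside one ambient path w
  (positions counted in written order, i.e. from the terminal end):
  the occurrence of q starting at offset k (w = b q a with len b = k) lies inside
  the occurrence of r starting at offset k' (w = b' r a' with len b' = k').\<close>
definition occ_inside :: "nat \<Rightarrow> ('v, 'a) path \<Rightarrow> nat \<Rightarrow> ('v, 'a) path \<Rightarrow> bool" where
  "occ_inside k q k' r \<longleftrightarrow> k' \<le> k \<and> k + len q \<le> k' + len r"

end

theory Submission
  imports Defs
begin


lemma valid_Nil: "valid Q (v, []) \<longleftrightarrow> v \<in> verts Q" by (simp add: valid_def)

lemma valid_Cons:
  "valid Q (v, \<alpha> # l) \<longleftrightarrow> \<alpha> \<in> arrs Q \<and> valid Q (v, l) \<and> srcA Q \<alpha> = ptgt Q (v, l)"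
proof (cases l)
  case Nil then show ?thesis by (auto simp: valid_def ptgt_def)
next
  case (Cons \<beta> l')
  have "(\<forall>i. Suc i < length (\<alpha> # l) \<longrightarrow> srcA Q ((\<alpha> # l) ! i) = tgtA Q ((\<alpha> # l) ! Suc i))
     \<longleftrightarrow> srcA Q \<alpha> = tgtA Q \<beta> \<and> (\<forall>i. Suc i < length l \<longrightarrow> srcA Q (l ! i) = tgtA Q (l ! Suc i))"
    (is "?A \<longleftrightarrow> ?B")
  proof
    assume ?A
    show ?B
    proof
      show "srcA Q \<alpha> = tgtA Q \<beta>" using spec[OF \<open>?A\<close>, of 0] Cons by simp
      show "\<forall>i. Suc i < length l \<longrightarrow> srcA Q (l ! i) = tgtA Q (l ! Suc i)"
        using \<open>?A\<close> by (metis Suc_less_eq length_Cons nth_Cons_Suc)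
    qed
  next
    assume ?B
    show ?A
    proof (intro allI impI)
      fix i assume "Suc i < length (\<alpha> # l)"
      then show "srcA Q ((\<alpha> # l) ! i) = tgtA Q ((\<alpha> # l) ! Suc i)"
        using \<open>?B\<close> Cons by (cases i) auto
    qed
  qed
  note ch = this
  have e1: "last (\<alpha> # l) = last l" and lne: "l \<noteq> []" using Cons by simp_all
  have e2: "ptgt Q (v, l) = tgtA Q \<beta>" using Cons by (simp add: ptgt_def)
  show ?thesis unfolding valid_def fst_conv snd_conv e1 ch e2 using lne by auto
qed

lemma ptgt_app: "ptgt Q (v, xs @ ys) = ptgt Q (ptgt Q (v, ys), xs)"
  by (auto simp: ptgt_def)

lemma valid_append:
  assumes tg: "\<forall>\<alpha>\<in>arrs Q. tgtA Q \<alpha> \<in> verts Q"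
  shows "valid Q (v, xs @ ys) \<longleftrightarrow> valid Q (v, ys) \<and> valid Q (ptgt Q (v, ys), xs)"
proof (induction xs)
  case Nil
  have "valid Q (v, ys) \<Longrightarrow> ptgt Q (v, ys) \<in> verts Q"
    using tg by (cases ys) (auto simp: valid_def ptgt_def)
  then show ?case by (auto simp: valid_Nil)
next
  case (Cons a xs)
  then show ?case by (auto simp: valid_Cons ptgt_app)
qed

lemma valid_fst: "valid Q (v, l) \<Longrightarrow> l \<noteq> [] \<Longrightarrow> v = srcA Q (last l)"
  by (simp add: valid_def)

definition inW :: "'a list set \<Rightarrow> 'a list \<Rightarrow> bool" where
  "inW S w \<longleftrightarrow> (\<exists>r\<in>S. \<exists>u v. w = u @ r @ v)"

lemma inI_inW: "inI Q R w \<Longrightarrow> inW (snd ` R) (snd w)"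
proof -
  assume "inI Q R w"
  then obtain r where r: "r \<in> R" and "divisor Q r w" unfolding inI_def by blast
  then obtain b a where "w = cat b (cat r a)" unfolding divisor_def by blast
  then have "snd w = snd b @ snd r @ snd a" by (simp add: cat_def)
  then show ?thesis unfolding inW_def using r by blast
qed

lemma ma_tg: "monomial_algebra Q R \<Longrightarrow> \<forall>\<alpha>\<in>arrs Q. tgtA Q \<alpha> \<in> verts Q"
  by (simp add: monomial_algebra_def)

lemma inW_inI:
  assumes ma: "monomial_algebra Q R" and vw: "valid Q w" and iw: "inW (snd ` R) (snd w)"
  shows "inI Q R w"
proof -
  have tg: "\<forall>\<alpha>\<in>arrs Q. tgtA Q \<alpha> \<in> verts Q" using ma_tg[OF ma] .
  obtain r xs ys where r: "r \<in> R" and w: "snd w = xs @ snd r @ ys"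
    using iw unfolding inW_def by auto
  have rv: "valid Q r" and rl: "len r \<ge> 2" using ma r unfolding monomial_algebra_def by blast+
  have rne: "snd r \<noteq> []" using rl by (auto simp: len_def)
  define a where "a = (fst w, ys)"
  define ra where "ra = (fst w, snd r @ ys)"
  define b where "b = (ptgt Q ra, xs)"
  have v1: "valid Q (fst w, xs @ (snd r @ ys))" using vw w by (metis surjective_pairing)
  have vra: "valid Q ra" and vb: "valid Q b" using v1 unfolding ra_def b_def valid_append[OF tg, of _ xs] by blast+
  have va: "valid Q a" and vr': "valid Q (ptgt Q a, snd r)" using vra unfolding ra_def a_def valid_append[OF tg, of _ "snd r"] by blast+
  have rv2: "valid Q (fst r, snd r)" using rv by simp
  have fr: "fst r = ptgt Q a"
    using valid_fst[OF rv2 rne] valid_fst[OF vr' rne] by simp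
  have cra: "cat r a = ra" unfolding cat_def a_def ra_def by simp
  have "composable Q r a" unfolding composable_def psrc_def using rv va fr by simp
  moreover have "composable Q b (cat r a)" unfolding composable_def psrc_def cra using vb vra b_def by simp
  moreover have "w = cat b (cat r a)" unfolding cra cat_def b_def ra_def a_def using w by (simp add: prod_eq_iff)
  ultimately have "divisor Q r w" unfolding divisor_def by blast
  then show ?thesis unfolding inI_def using r by blast
qed


definition slc :: "'a list \<Rightarrow> nat \<Rightarrow> nat \<Rightarrow> 'a list" where
  "slc x s k = take (k - s) (drop s x)"

definition occ :: "'a list set \<Rightarrow> 'a list \<Rightarrow> nat \<Rightarrow> nat \<Rightarrow> bool" where
  "occ S x s k \<longleftrightarrow> s \<le> k \<and> k \<le> length x \<and> inW S (slc x s k)"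

lemma slc_app: "slc (u @ w @ v) (length u) (length u + length w) = w"
  by (simp add: slc_def)

lemma slc_split: "s \<le> t \<Longrightarrow> t \<le> k \<Longrightarrow> slc x s k = slc x s t @ slc x t k"
proof -
  assume a: "s \<le> t" "t \<le> k"
  have "k - s = (t - s) + (k - t)" using a by simp
  then have "take (k - s) (drop s x) = take (t - s) (drop s x) @ take (k - t) (drop (t - s) (drop s x))"
    by (metis take_add)
  moreover have "drop (t - s) (drop s x) = drop t x" using a by simp
  ultimately show ?thesis unfolding slc_def by simp
qed

lemma inW_app: "inW S w \<Longrightarrow> inW S (u @ w @ v)"
  unfolding inW_def by (metis append.assoc)

lemma occ_mono_s: "s' \<le> s \<Longrightarrow> occ S x s k \<Longrightarrow> occ S x s' k"
  unfolding occ_def using slc_split[of s' s k x] inW_app[of S _ "slc x s' s" "[]"] by auto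

lemma occ_mono_k: "k \<le> k' \<Longrightarrow> k' \<le> length x \<Longrightarrow> occ S x s k \<Longrightarrow> occ S x s k'"
  unfolding occ_def using slc_split[of s k k' x] inW_app[of S _ "[]" "slc x k k'"] by auto

lemma inW_len: "\<forall>r\<in>S. 2 \<le> length r \<Longrightarrow> inW S w \<Longrightarrow> 2 \<le> length w"
  unfolding inW_def by force

lemma occ_len: "\<forall>r\<in>S. 2 \<le> length r \<Longrightarrow> occ S x s k \<Longrightarrow> s + 2 \<le> k"
proof -
  assume S: "\<forall>r\<in>S. 2 \<le> length r" and o: "occ S x s k"
  then have "2 \<le> length (slc x s k)" using inW_len unfolding occ_def by blast
  moreover have "length (slc x s k) \<le> k - s" unfolding slc_def by simp
  ultimately show ?thesis by linarith
qed

lemma inW_rev: "inW (rev ` S) (rev w) \<longleftrightarrow> inW S w"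
proof
  assume "inW (rev ` S) (rev w)"
  then obtain r u v where "r \<in> S" "rev w = u @ rev r @ v" unfolding inW_def by blast
  then have "w = rev v @ r @ rev u" by (metis append.assoc rev_append rev_rev_ident)
  then show "inW S w" unfolding inW_def using \<open>r \<in> S\<close> by blast
next
  assume "inW S w"
  then obtain r u v where "r \<in> S" "w = u @ r @ v" unfolding inW_def by blast
  then have "rev w = rev v @ rev r @ rev u" by simp
  then show "inW (rev ` S) (rev w)" unfolding inW_def using \<open>r \<in> S\<close> by blast
qed

lemma slc_rev: "s \<le> k \<Longrightarrow> k \<le> length x \<Longrightarrow> slc (rev x) s k = rev (slc x (length x - k) (length x - s))"
  unfolding slc_def by (cases "s = 0"; simp add: rev_take rev_drop min_def take_drop)

lemma occ_rev: "occ (rev ` S) (rev x) s k \<longleftrightarrow> s \<le> k \<and> k \<le> length x \<and> occ S x (length x - k) (length x - s)"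
proof (cases "s \<le> k \<and> k \<le> length x")
  case True
  then show ?thesis unfolding occ_def using slc_rev[of s k x] inW_rev[of S] by (simp add: diff_le_mono2)
next
  case False
  then show ?thesis unfolding occ_def by auto
qed


definition ech :: "(nat \<Rightarrow> nat \<Rightarrow> bool) \<Rightarrow> nat \<Rightarrow> nat \<Rightarrow> (nat \<Rightarrow> nat) \<Rightarrow> bool" where
  "ech P c N e \<longleftrightarrow> e 0 = c \<and> e 1 = Suc c
     \<and> (\<forall>i. i + 2 \<le> N \<longrightarrow> P (e i) (e (i + 2)) \<and> (\<forall>k < e (i + 2). \<not> P (e i) k))
     \<and> (\<forall>i < N. e i < e (Suc i) \<and> \<not> P (e i) (e (Suc i)))"

definition monoS :: "(nat \<Rightarrow> nat \<Rightarrow> bool) \<Rightarrow> bool" where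
  "monoS P \<longleftrightarrow> (\<forall>s s' k. P s k \<longrightarrow> s' \<le> s \<longrightarrow> P s' k)"

lemma monoS_occ: "monoS (occ S x)"
  unfolding monoS_def using occ_mono_s by blast

lemma ech_cmp:
  assumes "ech P c N e" "ech P c' N' d" "monoS P" "d i \<le> e j" "i + 2 \<le> N'" "j + 2 \<le> N"
  shows "d (i + 2) \<le> e (j + 2)"
proof -
  have "P (e j) (e (j + 2))" using assms(1,6) unfolding ech_def by blast
  then have "P (d i) (e (j + 2))" using assms(3,4) unfolding monoS_def by blast
  moreover have "\<forall>k < d (i + 2). \<not> P (d i) k" using assms(2,5) unfolding ech_def by blast
  ultimately show ?thesis by (meson not_le)
qed

lemma ech_cmp_iter:
  assumes "ech P c N e" "ech P c' N' d" "monoS P" "d i \<le> e j"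
  shows "i + 2 * t \<le> N' \<Longrightarrow> j + 2 * t \<le> N \<Longrightarrow> d (i + 2 * t) \<le> e (j + 2 * t)"
proof (induction t)
  case 0
  then show ?case using assms(4) by simp
next
  case (Suc t)
  then have "d (i + 2 * t) \<le> e (j + 2 * t)" by simp
  then have "d (i + 2 * t + 2) \<le> e (j + 2 * t + 2)"
    using ech_cmp[OF assms(1,2,3)] Suc.prems by simp
  then show ?case by (simp add: algebra_simps)
qed

lemma ech_mono: assumes "ech P c N e" shows "i \<le> j \<Longrightarrow> j \<le> N \<Longrightarrow> e i \<le> e j"
proof (induction j)
  case 0 then show ?case by simp
next
  case (Suc j)
  have "e j < e (Suc j)" using assms Suc.prems unfolding ech_def by auto
  then show ?case using Suc by (cases "i = Suc j") auto
qed

lemma ech_unique: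
  assumes "ech P c N e" "ech P c N e'"
  shows "i \<le> N \<Longrightarrow> e i = e' i"
proof (induction i rule: less_induct)
  case (less i)
  show ?case
  proof (cases i)
    case 0 then show ?thesis using assms unfolding ech_def by simp
  next
    case (Suc i1)
    show ?thesis
    proof (cases i1)
      case 0 then show ?thesis using assms Suc unfolding ech_def by simp
    next
      case (Suc j)
      have i: "i = j + 2" using \<open>i = Suc i1\<close> Suc by simp
      have ej: "e j = e' j" using less i by simp
      have a1: "P (e j) (e (j + 2))" "\<forall>k < e (j + 2). \<not> P (e j) k"
        using assms(1) less.prems i unfolding ech_def by blast+
      have a2: "P (e' j) (e' (j + 2))" "\<forall>k < e' (j + 2). \<not> P (e' j) k"
        using assms(2) less.prems i unfolding ech_def by blast+
      show ?thesis using a1 a2 ej i by (metis linorder_neqE_nat)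
    qed
  qed
qed

lemma part_abs:
  assumes e: "ech P 0 N e" and d: "ech P c M d" and mo: "monoS P"
    and M: "M = 2 * t + 1" and N: "M + 1 \<le> N"
  shows "(e 2 \<le> c) \<longleftrightarrow> \<not> (d M \<le> e (M + 1))"
proof
  assume "e 2 \<le> c"
  then have "e 2 \<le> d 0" using d unfolding ech_def by simp
  then have "e (2 + 2 * t) \<le> d (0 + 2 * t)"
    using ech_cmp_iter[OF d e mo, of 2 0 t] M N by simp
  moreover have "d (2 * t) < d (Suc (2 * t))" using d M unfolding ech_def by simp
  ultimately show "\<not> (d M \<le> e (M + 1))" using M by simp
next
  assume h: "\<not> (d M \<le> e (M + 1))"
  show "e 2 \<le> c"
  proof (rule ccontr)
    assume "\<not> e 2 \<le> c"
    then have "d 1 \<le> e 2" using d unfolding ech_def by simp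
    then have "d (1 + 2 * t) \<le> e (2 + 2 * t)"
      using ech_cmp_iter[OF e d mo, of 1 2 t] M N by simp
    then show False using h M by simp
  qed
qed


definition cum :: "'a list list \<Rightarrow> nat \<Rightarrow> nat" where
  "cum ls i = length (concat (take (Suc i) ls))"

definition lch :: "'a list set \<Rightarrow> 'a list list \<Rightarrow> bool" where
  "lch S ls \<longleftrightarrow> 2 \<le> length ls \<and> ls ! 0 = [] \<and> length (ls ! 1) = 1
     \<and> (\<forall>i < length ls. \<not> inW S (ls ! i))
     \<and> (\<forall>i. i + 2 < length ls \<longrightarrow> inW S (ls ! Suc i @ ls ! Suc (Suc i))
          \<and> (\<forall>j < length (ls ! Suc i @ ls ! Suc (Suc i)). \<not> inW S (take j (ls ! Suc i @ ls ! Suc (Suc i)))))"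

lemma lch_ne: assumes "lch S ls" "1 \<le> i" "i < length ls" shows "ls ! i \<noteq> []"
proof (cases i)
  case 0 then show ?thesis using assms by simp
next
  case (Suc i1)
  show ?thesis
  proof (cases i1)
    case 0 then show ?thesis using assms Suc unfolding lch_def by auto
  next
    case (Suc j)
    have "j + 2 < length ls" using assms \<open>i = Suc i1\<close> Suc by simp
    then have "inW S (ls ! Suc j @ ls ! Suc (Suc j))" "\<not> inW S (ls ! Suc j)"
      using assms(1) unfolding lch_def by auto
    then show ?thesis using \<open>i = Suc i1\<close> Suc by auto
  qed
qed

lemma concat_take_Suc: "i < length ls \<Longrightarrow> concat (take (Suc i) ls) = concat (take i ls) @ ls ! i"
  by (simp add: take_Suc_conv_app_nth)

lemma drop_cum:
  assumes x: "x = pre @ concat ls @ post" and i: "i < length ls"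
  shows "drop (length pre + cum ls i) x = concat (drop (Suc i) ls) @ post"
proof -
  have "concat ls = concat (take (Suc i) ls) @ concat (drop (Suc i) ls)"
    by (metis append_take_drop_id concat_append)
  then show ?thesis unfolding x cum_def by simp
qed

lemma cum_Suc: "Suc i < length ls \<Longrightarrow> cum ls (Suc i) = cum ls i + length (ls ! Suc i)"
  unfolding cum_def using concat_take_Suc[of "Suc i" ls] by simp

lemma cum_le: "i < length ls \<Longrightarrow> cum ls i \<le> length (concat ls)"
proof -
  assume "i < length ls"
  have "concat ls = concat (take (Suc i) ls) @ concat (drop (Suc i) ls)"
    by (metis append_take_drop_id concat_append)
  then show ?thesis unfolding cum_def by (metis le_add1 length_append)
qed

lemma cum_last: "ls \<noteq> [] \<Longrightarrow> cum ls (length ls - 1) = length (concat ls)"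
  unfolding cum_def by simp

lemma lch_ech:
  assumes l: "lch S ls" and x: "x = pre @ concat ls @ post" and S2: "\<forall>r\<in>S. 2 \<le> length r"
  shows "ech (occ S x) (length pre) (length ls - 1) (\<lambda>i. length pre + cum ls i)"
proof -
  define e where "e = (\<lambda>i. length pre + cum ls i)"
  have len: "2 \<le> length ls" and l0: "ls ! 0 = []" and l1: "length (ls ! 1) = 1"
    and B: "\<forall>i < length ls. \<not> inW S (ls ! i)"
    and R: "\<And>i. i + 2 < length ls \<Longrightarrow> inW S (ls ! Suc i @ ls ! Suc (Suc i))
          \<and> (\<forall>j < length (ls ! Suc i @ ls ! Suc (Suc i)). \<not> inW S (take j (ls ! Suc i @ ls ! Suc (Suc i))))"
    using l unfolding lch_def by auto
  have elen: "\<And>i. i < length ls \<Longrightarrow> e i \<le> length x"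
  proof -
    fix i assume a: "i < length ls"
    have "cum ls i \<le> length (concat ls)" using cum_le a by blast
    then show "e i \<le> length x" unfolding e_def x by simp
  qed
  have dr: "\<And>i. i < length ls \<Longrightarrow> drop (e i) x = concat (drop (Suc i) ls) @ post"
    unfolding e_def using drop_cum[OF x] by blast
  have eS: "\<And>i. Suc i < length ls \<Longrightarrow> e (Suc i) = e i + length (ls ! Suc i)"
    unfolding e_def using cum_Suc by fastforce
  have e0: "e 0 = length pre" unfolding e_def cum_def using len l0
    by (cases ls) auto
  have e1: "e 1 = Suc (length pre)" using eS[of 0] e0 l1 len by simp
  have dr1: "\<And>i. Suc i < length ls \<Longrightarrow> \<exists>rest. drop (e i) x = ls ! Suc i @ rest"
  proof -
    fix i assume a: "Suc i < length ls"
    have "drop (e i) x = concat (drop (Suc i) ls) @ post" using dr a by simp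
    also have "drop (Suc i) ls = ls ! Suc i # drop (Suc (Suc i)) ls"
      using a by (simp add: Cons_nth_drop_Suc)
    finally show "\<exists>rest. drop (e i) x = ls ! Suc i @ rest" by simp
  qed
  have dr2: "\<And>i. i + 2 < length ls \<Longrightarrow> \<exists>rest. drop (e i) x = (ls ! Suc i @ ls ! Suc (Suc i)) @ rest"
  proof -
    fix i assume a: "i + 2 < length ls"
    have "drop (e i) x = concat (drop (Suc i) ls) @ post" using dr a by simp
    also have "drop (Suc i) ls = ls ! Suc i # ls ! Suc (Suc i) # drop (Suc (Suc (Suc i))) ls"
      using a by (simp add: Cons_nth_drop_Suc)
    finally show "\<exists>rest. drop (e i) x = (ls ! Suc i @ ls ! Suc (Suc i)) @ rest" by simp
  qed
  have slc1: "\<And>i. Suc i < length ls \<Longrightarrow> slc x (e i) (e (Suc i)) = ls ! Suc i"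
  proof -
    fix i assume a: "Suc i < length ls"
    obtain rest where "drop (e i) x = ls ! Suc i @ rest" using dr1[OF a] by blast
    then show "slc x (e i) (e (Suc i)) = ls ! Suc i" unfolding slc_def using eS[OF a] by simp
  qed
  have slc2: "\<And>i k. i + 2 < length ls \<Longrightarrow> e i \<le> k \<Longrightarrow> k \<le> e (i + 2) \<Longrightarrow>
      slc x (e i) k = take (k - e i) (ls ! Suc i @ ls ! Suc (Suc i))"
  proof -
    fix i k assume a: "i + 2 < length ls" "e i \<le> k" "k \<le> e (i + 2)"
    obtain rest where r: "drop (e i) x = (ls ! Suc i @ ls ! Suc (Suc i)) @ rest" using dr2[OF a(1)] by blast
    have "e (i + 2) = e i + length (ls ! Suc i @ ls ! Suc (Suc i))"
      using eS[of i] eS[of "Suc i"] a(1) by simp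
    then show "slc x (e i) k = take (k - e i) (ls ! Suc i @ ls ! Suc (Suc i))"
      unfolding slc_def r using a by simp
  qed
  have part3: "\<forall>i. i + 2 \<le> length ls - 1 \<longrightarrow> occ S x (e i) (e (i + 2)) \<and> (\<forall>k < e (i + 2). \<not> occ S x (e i) k)"
  proof (rule allI, rule impI, rule conjI)
    fix i assume a: "i + 2 \<le> length ls - 1"
    then have a': "i + 2 < length ls" by simp
    have le: "e i \<le> e (i + 2)" using eS[of i] eS[of "Suc i"] a' by simp
    show "occ S x (e i) (e (i + 2))" unfolding occ_def
      using slc2[OF a' le order.refl] R[OF a'] le elen[OF a'] eS[of i] eS[of "Suc i"] a' by simp
    show "\<forall>k<e (i + 2). \<not> occ S x (e i) k"
    proof (intro allI impI notI)
      fix k assume k: "k < e (i + 2)" and o: "occ S x (e i) k"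
      then have ik: "e i \<le> k" unfolding occ_def by simp
      have "slc x (e i) k = take (k - e i) (ls ! Suc i @ ls ! Suc (Suc i))" using slc2[OF a' ik] k by simp
      moreover have "k - e i < length (ls ! Suc i @ ls ! Suc (Suc i))"
        using k ik eS[of i] eS[of "Suc i"] a' by simp
      ultimately show False using R[OF a'] o unfolding occ_def by auto
    qed
  qed
  have part4: "\<forall>i < length ls - 1. e i < e (Suc i) \<and> \<not> occ S x (e i) (e (Suc i))"
  proof (intro allI impI conjI)
    fix i assume a: "i < length ls - 1"
    then have a': "Suc i < length ls" by simp
    show "e i < e (Suc i)" using eS[OF a'] lch_ne[OF l _ a'] by simp
    show "\<not> occ S x (e i) (e (Suc i))" unfolding occ_def slc1[OF a'] using B a' by simp
  qed
  show ?thesis unfolding ech_def e_def[symmetric] using e0 e1 part3 part4 by simp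
qed


fun fr :: "(nat \<Rightarrow> nat \<Rightarrow> bool) \<Rightarrow> nat \<Rightarrow> nat" where
  "fr P 0 = 0"
| "fr P (Suc 0) = 1"
| "fr P (Suc (Suc j)) = (LEAST k. P (fr P j) k)"

lemma rev_ech:
  assumes S2: "\<forall>r\<in>S. 2 \<le> length r" and e: "ech (occ S x) 0 N e" and eN: "e N = length x"
    and N1: "1 \<le> N"
  shows "ech (occ (rev ` S) (rev x)) 0 N (fr (occ (rev ` S) (rev x)))
         \<and> fr (occ (rev ` S) (rev x)) N = length x"
proof -
  define P where "P = occ S x"
  define P' where "P' = occ (rev ` S) (rev x)"
  define f where "f = fr P'"
  define L where "L = length x"
  have eR: "\<And>i. i + 2 \<le> N \<Longrightarrow> P (e i) (e (i + 2))"
    and eMin: "\<And>i k. i + 2 \<le> N \<Longrightarrow> k < e (i + 2) \<Longrightarrow> \<not> P (e i) k"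
    and eS: "\<And>i. i < N \<Longrightarrow> e i < e (Suc i)"
    and eB: "\<And>i. i < N \<Longrightarrow> \<not> P (e i) (e (Suc i))"
    and e0: "e 0 = 0" and e1: "e 1 = 1"
    using e unfolding ech_def P_def by auto
  have emono: "\<And>i j. i \<le> j \<Longrightarrow> j \<le> N \<Longrightarrow> e i \<le> e j" using ech_mono[OF e] by blast
  have eL: "\<And>i. i \<le> N \<Longrightarrow> e i \<le> L" using emono[of _ N] eN L_def by fastforce
  have L1: "1 \<le> L" using emono[of 1 N] N1 e1 eN L_def by simp
  have P'rev: "\<And>s k. P' s k \<longleftrightarrow> s \<le> k \<and> k \<le> L \<and> P (L - k) (L - s)"
    unfolding P'_def P_def L_def using occ_rev by blast
  have monoP: "\<And>s s' k. P s k \<Longrightarrow> s' \<le> s \<Longrightarrow> P s' k" unfolding P_def using occ_mono_s by blast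
  have monoPk: "\<And>s k k'. P s k \<Longrightarrow> k \<le> k' \<Longrightarrow> k' \<le> L \<Longrightarrow> P s k'"
    unfolding P_def L_def using occ_mono_k by blast
  have Plen: "\<And>s k. P s k \<Longrightarrow> s + 2 \<le> k" unfolding P_def using occ_len[OF S2] by blast
  have f0: "f 0 = 0" and f1: "f 1 = 1" unfolding f_def by simp_all
  have fSS: "\<And>j. f (Suc (Suc j)) = (LEAST k. P' (f j) k)" unfolding f_def by simp
  define Inv where "Inv = (\<lambda>J. f J \<le> L \<and> e (N - J) \<le> L - f J \<and> (1 \<le> J \<longrightarrow> L - f J < e (N + 1 - J))
      \<and> (2 \<le> J \<longrightarrow> P' (f (J - 2)) (f J) \<and> (\<forall>k < f J. \<not> P' (f (J - 2)) k)))"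
  have inv: "\<And>J. J \<le> N \<Longrightarrow> Inv J"
  proof -
    fix J show "J \<le> N \<Longrightarrow> Inv J"
    proof (induction J rule: less_induct)
      case (less J)
      show ?case
      proof (cases J)
        case 0 then show ?thesis unfolding Inv_def using f0 eN L_def by simp
      next
        case (Suc J1)
        show ?thesis
        proof (cases J1)
          case 0
          have "e (N - 1) < e N" using eS[of "N - 1"] N1 by simp
          then show ?thesis unfolding Inv_def using Suc 0 f1 L1 eN L_def by (simp; arith)
        next
          case (Suc j)
          have J: "J = j + 2" using \<open>J = Suc J1\<close> Suc by simp
          have jN: "j + 2 \<le> N" using less.prems J by simp
          have IH: "Inv j" using less.IH[of j] J jN by simp
          then have fjL: "f j \<le> L" and low: "e (N - j) \<le> L - f j"
            and up: "1 \<le> j \<Longrightarrow> L - f j < e (N + 1 - j)" unfolding Inv_def by auto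
          have nn: "N - 2 - j + 2 = N - j" using jN by simp
          have r1: "P (e (N - 2 - j)) (e (N - j))" using eR[of "N - 2 - j"] jN unfolding nn by simp
          have r2: "P (e (N - 2 - j)) (L - f j)" using monoPk[OF r1 low] by simp
          have eL2: "e (N - 2 - j) \<le> e (N - j)" using emono[of "N - 2 - j" "N - j"] by simp
          have eL3: "e (N - j) \<le> L" using eL[of "N - j"] by simp
          have ex: "P' (f j) (L - e (N - 2 - j))"
            unfolding P'rev using r2 eL2 low fjL eL3 by (simp add: le_diff_conv2)
          have fJ: "f J = (LEAST k. P' (f j) k)" using fSS J by simp
          have PJ: "P' (f j) (f J)" unfolding fJ using LeastI[of "P' (f j)", OF ex] .
          have fJle: "f J \<le> L - e (N - 2 - j)" unfolding fJ using Least_le[of "P' (f j)", OF ex] .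
          have minJ: "\<forall>k < f J. \<not> P' (f j) k" unfolding fJ using not_less_Least by blast
          have fJL: "f J \<le> L" using PJ P'rev by blast
          have low2: "e (N - J) \<le> L - f J" using fJle J eL3 eL2 by simp
          have up2: "L - f J < e (N + 1 - J)"
          proof (rule ccontr)
            assume "\<not> L - f J < e (N + 1 - J)"
            then have ge: "e (N - 1 - j) \<le> L - f J" using J by simp
            have "P (L - f J) (L - f j)" using PJ P'rev by blast
            then have pp: "P (e (N - 1 - j)) (L - f j)" using monoP ge by blast
            show False
            proof (cases j)
              case 0
              have "P (e (N - 1)) (e (Suc (N - 1)))" using pp 0 f0 eN L_def N1 by simp
              then show False using eB[of "N - 1"] N1 by simp
            next
              case (Suc j')
              have a: "L - f j < e (N + 1 - j)" using up Suc by simp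
              have "N - 1 - j + 2 \<le> N" using Suc jN by simp
              moreover have "N - 1 - j + 2 = N + 1 - j" using Suc jN by simp
              ultimately show False using eMin[of "N - 1 - j" "L - f j"] a pp by simp
            qed
          qed
          show ?thesis unfolding Inv_def using fJL low2 up2 PJ minJ J by simp
        qed
      qed
    qed
  qed
  have A: "\<forall>i. i + 2 \<le> N \<longrightarrow> P' (f i) (f (i + 2)) \<and> (\<forall>k < f (i + 2). \<not> P' (f i) k)"
  proof (rule allI, rule impI)
    fix i assume a: "i + 2 \<le> N"
    have "Inv (i + 2)" using inv a .
    then show "P' (f i) (f (i + 2)) \<and> (\<forall>k < f (i + 2). \<not> P' (f i) k)" unfolding Inv_def by auto
  qed
  have B: "\<forall>i < N. f i < f (Suc i) \<and> \<not> P' (f i) (f (Suc i))"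
  proof (rule allI, rule impI)
    fix i assume a: "i < N"
    have I1: "Inv i" and I2: "Inv (Suc i)" using inv a by auto
    then have fi: "f i \<le> L" "e (N - i) \<le> L - f i" and fSi: "f (Suc i) \<le> L" "L - f (Suc i) < e (N - i)"
      "e (N - Suc i) \<le> L - f (Suc i)"
      unfolding Inv_def by auto
    have c1: "f i < f (Suc i)" using fi fSi by linarith
    have c2: "\<not> P' (f i) (f (Suc i))"
    proof
      assume "P' (f i) (f (Suc i))"
      then have pp: "P (L - f (Suc i)) (L - f i)" using P'rev by blast
      show False
      proof (cases i)
        case 0
        then show False using Plen[OF pp] f0 f1 L1 by simp
      next
        case (Suc i')
        have up: "L - f i < e (N + 1 - i)" using I1 Suc unfolding Inv_def by simp
        have p2: "P (e (N - Suc i)) (L - f i)" using monoP[OF pp fSi(3)] .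
        have "N - Suc i + 2 \<le> N" "N - Suc i + 2 = N + 1 - i" using Suc a by auto
        then show False using eMin[of "N - Suc i" "L - f i"] up p2 by simp
      qed
    qed
    show "f i < f (Suc i) \<and> \<not> P' (f i) (f (Suc i))" using c1 c2 by blast
  qed
  have ech': "ech P' 0 N f" unfolding ech_def using A B f0 f1 by simp
  have "Inv N" using inv by simp
  then have "f N = L" unfolding Inv_def using e1 N1 by auto
  then show ?thesis using ech' unfolding f_def P'_def L_def by simp
qed


lemma composable_valid:
  assumes ma: "monomial_algebra Q R" and c: "composable Q q p"
  shows "valid Q (cat q p)"
proof -
  have tg: "\<forall>\<alpha>\<in>arrs Q. tgtA Q \<alpha> \<in> verts Q" using ma_tg[OF ma] .
  have vq: "valid Q (fst q, snd q)" and vp: "valid Q (fst p, snd p)" and e: "ptgt Q p = fst q"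
    using c unfolding composable_def psrc_def by auto
  have "ptgt Q (fst p, snd p) = fst q" using e by simp
  then show ?thesis unfolding cat_def valid_append[OF tg] using vq vp by simp
qed

lemma prefix_path:
  assumes ma: "monomial_algebra Q R" and vc: "valid Q c" and j: "j < length (snd c)"
  shows "\<exists>r. is_suffix Q r c \<and> r \<noteq> c \<and> valid Q r \<and> snd r = take j (snd c)"
proof -
  have tg: "\<forall>\<alpha>\<in>arrs Q. tgtA Q \<alpha> \<in> verts Q" using ma_tg[OF ma] .
  define a where "a = (fst c, drop j (snd c))"
  define r where "r = (ptgt Q a, take j (snd c))"
  have "valid Q (fst c, take j (snd c) @ drop j (snd c))" using vc by simp
  then have va: "valid Q a" and vr: "valid Q r" unfolding a_def r_def valid_append[OF tg] by blast+
  have "composable Q r a" unfolding composable_def psrc_def using va vr r_def by simp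
  moreover have "c = cat r a" unfolding cat_def r_def a_def by simp
  ultimately have "is_suffix Q r c" unfolding is_suffix_def by blast
  moreover have "length (snd r) \<noteq> length (snd c)" using j unfolding r_def by simp
  then have "r \<noteq> c" by auto
  ultimately show ?thesis using vr r_def by auto
qed

lemma suffix_path:
  assumes ma: "monomial_algebra Q R" and vc: "valid Q c" and t: "0 < t" and True: "t \<le> length (snd c)"
  shows "\<exists>r. is_prefix Q r c \<and> r \<noteq> c \<and> valid Q r \<and> snd r = drop t (snd c)"
proof -
  have tg: "\<forall>\<alpha>\<in>arrs Q. tgtA Q \<alpha> \<in> verts Q" using ma_tg[OF ma] .
  define r where "r = (fst c, drop t (snd c))"
  define b where "b = (ptgt Q r, take t (snd c))"
  have "valid Q (fst c, take t (snd c) @ drop t (snd c))" using vc by simp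
  then have vr: "valid Q r" and vb: "valid Q b" unfolding b_def r_def valid_append[OF tg] by blast+
  have "composable Q b r" unfolding composable_def psrc_def using vb vr b_def by simp
  moreover have "c = cat b r" unfolding cat_def r_def b_def by simp
  ultimately have "is_prefix Q r c" unfolding is_prefix_def by blast
  moreover have "length (snd r) \<noteq> length (snd c)" using t True unfolding r_def by simp
  then have "r \<noteq> c" by auto
  ultimately show ?thesis using vr r_def by auto


qed


lemma ma_S2: "monomial_algebra Q R \<Longrightarrow> \<forall>r\<in>snd ` R. 2 \<le> length r"
  unfolding monomial_algebra_def len_def by auto

lemma ma_S2r: "monomial_algebra Q R \<Longrightarrow> \<forall>r\<in>rev ` snd ` R. 2 \<le> length r"
  unfolding monomial_algebra_def len_def by auto

lemma Bp_notW: "monomial_algebra Q R \<Longrightarrow> u \<in> Bpaths Q R \<Longrightarrow> \<not> inW (snd ` R) (snd u)"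
  unfolding Bpaths_def using inW_inI by blast

lemma left_lch:
  assumes ma: "monomial_algebra Q R" and ld: "left_decomp Q R n w us" and n0: "0 \<le> n"
  shows "lch (snd ` R) (map snd us) \<and> concat (map snd us) = snd w \<and> length us = nat (n + 2)"
proof -
  have len: "length us = nat (n + 2)" and conc: "snd w = concat (map snd us)"
    and comp: "\<forall>j. Suc j < length us \<longrightarrow> composable Q (us ! j) (us ! Suc j)"
    and l0: "len (us ! 0) = 0" and l1: "length us > 1 \<longrightarrow> len (us ! 1) = 1"
    and B: "\<forall>j < length us. us ! j \<in> Bpaths Q R"
    and Rel: "\<forall>i. i + 2 < length us \<longrightarrow>
          inI Q R (cat (us ! Suc i) (us ! Suc (Suc i)))
          \<and> (\<forall>r. is_suffix Q r (cat (us ! Suc i) (us ! Suc (Suc i)))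
                 \<and> r \<noteq> cat (us ! Suc i) (us ! Suc (Suc i)) \<longrightarrow> \<not> inI Q R r)"
    using ld unfolding left_decomp_def by auto
  have len2: "2 \<le> length us" using len n0 by simp
  define ls where "ls = map snd us"
  have "0 < length us" using len2 by linarith
  then have c1: "ls ! 0 = []" using l0 unfolding ls_def len_def by simp
  have c2: "length (ls ! 1) = 1" using l1 len2 unfolding ls_def len_def by simp
  have c3: "\<forall>i < length ls. \<not> inW (snd ` R) (ls ! i)"
    using B Bp_notW[OF ma] unfolding ls_def by simp
  have c4: "\<forall>i. i + 2 < length ls \<longrightarrow> inW (snd ` R) (ls ! Suc i @ ls ! Suc (Suc i))
          \<and> (\<forall>j < length (ls ! Suc i @ ls ! Suc (Suc i)). \<not> inW (snd ` R) (take j (ls ! Suc i @ ls ! Suc (Suc i))))"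
  proof (rule allI, rule impI)
    fix i assume a: "i + 2 < length ls"
    then have a': "i + 2 < length us" unfolding ls_def by simp
    define c where "c = cat (us ! Suc i) (us ! Suc (Suc i))"
    have sc: "snd c = ls ! Suc i @ ls ! Suc (Suc i)" unfolding c_def cat_def ls_def using a' by simp
    have vc: "valid Q c" unfolding c_def using composable_valid[OF ma] comp a' by simp
    have i1: "inI Q R c" and mn: "\<forall>r. is_suffix Q r c \<and> r \<noteq> c \<longrightarrow> \<not> inI Q R r"
      using Rel a' unfolding c_def by blast+
    have w1: "inW (snd ` R) (ls ! Suc i @ ls ! Suc (Suc i))" using inI_inW[OF i1] sc by simp
    have w2: "\<forall>j < length (ls ! Suc i @ ls ! Suc (Suc i)). \<not> inW (snd ` R) (take j (ls ! Suc i @ ls ! Suc (Suc i)))"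
    proof (intro allI impI notI)
      fix j assume j: "j < length (ls ! Suc i @ ls ! Suc (Suc i))" and iw: "inW (snd ` R) (take j (ls ! Suc i @ ls ! Suc (Suc i)))"
      obtain r where r: "is_suffix Q r c" "r \<noteq> c" "valid Q r" "snd r = take j (snd c)"
        using prefix_path[OF ma vc, of j] j sc by auto
      have "inI Q R r" using inW_inI[OF ma r(3)] iw r(4) sc by simp
      then show False using mn r by blast
    qed
    show "inW (snd ` R) (ls ! Suc i @ ls ! Suc (Suc i)) \<and> (\<forall>j < length (ls ! Suc i @ ls ! Suc (Suc i)). \<not> inW (snd ` R) (take j (ls ! Suc i @ ls ! Suc (Suc i))))"
      using w1 w2 by blast
  qed
  have "lch (snd ` R) ls" unfolding lch_def using len2 c1 c2 c3 c4 unfolding ls_def by simp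
  then show ?thesis using conc len unfolding ls_def by simp
qed

lemma right_lch:
  assumes ma: "monomial_algebra Q R" and rd: "right_decomp Q R n w vs" and n0: "0 \<le> n"
  shows "lch (rev ` snd ` R) (map (rev \<circ> snd) vs) \<and> concat (map (rev \<circ> snd) vs) = rev (snd w)
         \<and> length vs = nat (n + 2)"
proof -
  have len: "length vs = nat (n + 2)" and conc: "snd w = concat (map snd (rev vs))"
    and comp: "\<forall>j. Suc j < length vs \<longrightarrow> composable Q (vs ! Suc j) (vs ! j)"
    and l0: "len (vs ! 0) = 0" and l1: "length vs > 1 \<longrightarrow> len (vs ! 1) = 1"
    and B: "\<forall>j < length vs. vs ! j \<in> Bpaths Q R"
    and Rel: "\<forall>i. i + 2 < length vs \<longrightarrow>
          inI Q R (cat (vs ! Suc (Suc i)) (vs ! Suc i))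
          \<and> (\<forall>r. is_prefix Q r (cat (vs ! Suc (Suc i)) (vs ! Suc i))
                 \<and> r \<noteq> cat (vs ! Suc (Suc i)) (vs ! Suc i) \<longrightarrow> \<not> inI Q R r)"
    using rd unfolding right_decomp_def by auto
  have len2: "2 \<le> length vs" using len n0 by simp
  define ls where "ls = map (rev \<circ> snd) vs"
  have conc': "concat ls = rev (snd w)" unfolding ls_def conc by (simp add: rev_concat rev_map)
  have "0 < length vs" using len2 by linarith
  then have c1: "ls ! 0 = []" using l0 unfolding ls_def len_def by simp
  have c2: "length (ls ! 1) = 1" using l1 len2 unfolding ls_def len_def by simp
  have c3: "\<forall>i < length ls. \<not> inW (rev ` snd ` R) (ls ! i)"
    using B Bp_notW[OF ma] unfolding ls_def by (simp add: inW_rev)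
  have c4: "\<forall>i. i + 2 < length ls \<longrightarrow> inW (rev ` snd ` R) (ls ! Suc i @ ls ! Suc (Suc i))
          \<and> (\<forall>j < length (ls ! Suc i @ ls ! Suc (Suc i)). \<not> inW (rev ` snd ` R) (take j (ls ! Suc i @ ls ! Suc (Suc i))))"
  proof (rule allI, rule impI)
    fix i assume a: "i + 2 < length ls"
    then have a': "i + 2 < length vs" unfolding ls_def by simp
    define c where "c = cat (vs ! Suc (Suc i)) (vs ! Suc i)"
    have sc: "ls ! Suc i @ ls ! Suc (Suc i) = rev (snd c)" unfolding c_def cat_def ls_def using a' by simp
    have vc: "valid Q c" unfolding c_def using composable_valid[OF ma] comp a' by simp
    have i1: "inI Q R c" and mn: "\<forall>r. is_prefix Q r c \<and> r \<noteq> c \<longrightarrow> \<not> inI Q R r"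
      using Rel a' unfolding c_def by blast+
    have w1: "inW (rev ` snd ` R) (ls ! Suc i @ ls ! Suc (Suc i))" using inI_inW[OF i1] sc by (simp add: inW_rev)
    have w2: "\<forall>j < length (ls ! Suc i @ ls ! Suc (Suc i)). \<not> inW (rev ` snd ` R) (take j (ls ! Suc i @ ls ! Suc (Suc i)))"
    proof (intro allI impI notI)
      fix j assume j: "j < length (ls ! Suc i @ ls ! Suc (Suc i))" and iw: "inW (rev ` snd ` R) (take j (ls ! Suc i @ ls ! Suc (Suc i)))"
      define t where "t = length (snd c) - j"
      have jl: "j < length (snd c)" using j sc by (metis length_rev)
      have tk: "take j (rev (snd c)) = rev (drop t (snd c))" using jl unfolding t_def by (simp add: rev_drop)
      have iw': "inW (snd ` R) (drop t (snd c))" using iw sc tk inW_rev by metis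
      obtain r where r: "is_prefix Q r c" "r \<noteq> c" "valid Q r" "snd r = drop t (snd c)"
        using suffix_path[OF ma vc, of t] jl unfolding t_def by auto
      have "inI Q R r" using inW_inI[OF ma r(3)] iw' r(4) by simp
      then show False using mn r by blast
    qed
    show "inW (rev ` snd ` R) (ls ! Suc i @ ls ! Suc (Suc i)) \<and> (\<forall>j < length (ls ! Suc i @ ls ! Suc (Suc i)). \<not> inW (rev ` snd ` R) (take j (ls ! Suc i @ ls ! Suc (Suc i))))"
      using w1 w2 by blast
  qed
  have "lch (rev ` snd ` R) ls" unfolding lch_def using len2 c1 c2 c3 c4 unfolding ls_def by simp
  then show ?thesis using conc' len unfolding ls_def by simp
qed


lemma list_eq_cum:
  "length ls = length ls' \<Longrightarrow> concat ls = concat ls' \<Longrightarrow> (\<forall>i<length ls. cum ls i = cum ls' i) \<Longrightarrow> ls = ls'"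
proof (induction ls arbitrary: ls')
  case Nil then show ?case by simp
next
  case (Cons a as)
  obtain a' as' where ls': "ls' = a' # as'" using Cons.prems(1) by (cases ls') auto
  have "cum (a # as) 0 = cum ls' 0" using Cons.prems(3) by simp
  then have la: "length a = length a'" unfolding ls' cum_def by simp
  have "a @ concat as = a' @ concat as'" using Cons.prems(2) ls' by simp
  then have aa: "a = a'" and cc: "concat as = concat as'" using la by auto
  have "\<forall>i<length as. cum as i = cum as' i"
  proof (intro allI impI)
    fix i assume "i < length as"
    then have "cum (a # as) (Suc i) = cum ls' (Suc i)" using Cons.prems(3) by simp
    then show "cum as i = cum as' i" unfolding ls' cum_def using la by simp
  qed
  then have "as = as'" using Cons.IH[of as'] Cons.prems(1) cc ls' by simp
  then show ?case using aa ls' by simp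
qed

lemma Bp_valid: "u \<in> Bpaths Q R \<Longrightarrow> valid Q u"
  unfolding Bpaths_def by simp

lemma valid_fst': "valid Q u \<Longrightarrow> snd u \<noteq> [] \<Longrightarrow> fst u = srcA Q (last (snd u))"
  using valid_fst[of Q "fst u" "snd u"] by simp

lemma cum_ech_eq:
  assumes S2: "\<forall>r\<in>S. 2 \<le> length r" and l: "lch S ls" and l': "lch S ls'"
    and c: "concat ls = concat ls'" and ln: "length ls = length ls'"
  shows "ls = ls'"
proof -
  have e1: "ech (occ S (concat ls)) 0 (length ls - 1) (\<lambda>i. cum ls i)"
    using lch_ech[OF l, of "concat ls" "[]" "[]"] S2 by simp
  have e2: "ech (occ S (concat ls)) 0 (length ls - 1) (\<lambda>i. cum ls' i)"
    using lch_ech[OF l', of "concat ls" "[]" "[]"] S2 c ln by simp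
  have "\<forall>i<length ls. cum ls i = cum ls' i"
    using ech_unique[OF e1 e2] by simp
  then show ?thesis using list_eq_cum ln c by blast
qed

lemma left_unique:
  assumes ma: "monomial_algebra Q R" and d1: "left_decomp Q R n w us" and d2: "left_decomp Q R n w us'"
    and n0: "0 \<le> n"
  shows "us = us'"
proof -
  have l1: "lch (snd ` R) (map snd us)" "concat (map snd us) = snd w" "length us = nat (n + 2)"
    using left_lch[OF ma d1 n0] by auto
  have l2: "lch (snd ` R) (map snd us')" "concat (map snd us') = snd w" "length us' = nat (n + 2)"
    using left_lch[OF ma d2 n0] by auto
  have ms: "map snd us = map snd us'"
    using cum_ech_eq[OF ma_S2[OF ma] l1(1) l2(1)] l1 l2 by simp
  have ln: "length us = length us'" using l1 l2 by simp
  have sn: "\<And>j. j < length us \<Longrightarrow> snd (us ! j) = snd (us' ! j)"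
    using ms ln by (metis nth_map)
  have B1: "\<forall>j < length us. us ! j \<in> Bpaths Q R" and B2: "\<forall>j < length us'. us' ! j \<in> Bpaths Q R"
    and c1: "composable Q (us ! 0) (us ! Suc 0)" and c2: "composable Q (us' ! 0) (us' ! Suc 0)"
    using d1 d2 n0 unfolding left_decomp_def by auto
  have ge1: "\<And>j. 1 \<le> j \<Longrightarrow> j < length us \<Longrightarrow> us ! j = us' ! j"
  proof -
    fix j assume j: "1 \<le> j" "j < length us"
    have ne: "snd (us ! j) \<noteq> []" using lch_ne[OF l1(1), of j] j by simp
    have "fst (us ! j) = srcA Q (last (snd (us ! j)))" using valid_fst'[OF Bp_valid[of _ Q R] ne] B1 j by simp
    moreover have ne': "snd (us' ! j) \<noteq> []" using ne sn j by simp
    moreover have "fst (us' ! j) = srcA Q (last (snd (us' ! j)))"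
      using valid_fst'[OF Bp_valid[of _ Q R] ne'] B2 j ln by simp
    ultimately show "us ! j = us' ! j" using sn[OF j(2)] by (simp add: prod_eq_iff)
  qed
  have "2 \<le> length us" using l1 n0 by simp
  then have u1: "us ! 1 = us' ! 1" using ge1 by simp
  have "fst (us ! 0) = fst (us' ! 0)" using c1 c2 u1 unfolding composable_def psrc_def by simp
  then have u0: "us ! 0 = us' ! 0" using sn[of 0] \<open>2 \<le> length us\<close> by (metis prod_eq_iff gr0I le_zero_eq zero_neq_numeral)
  show ?thesis
  proof (rule nth_equalityI)
    show "length us = length us'" using ln .
    fix j assume "j < length us"
    then show "us ! j = us' ! j" using ge1 u0 by (cases "j = 0") auto
  qed
qed

lemma right_unique:
  assumes ma: "monomial_algebra Q R" and d1: "right_decomp Q R n w vs" and d2: "right_decomp Q R n w vs'"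
    and n0: "0 \<le> n"
  shows "vs = vs'"
proof -
  have l1: "lch (rev ` snd ` R) (map (rev \<circ> snd) vs)" "concat (map (rev \<circ> snd) vs) = rev (snd w)" "length vs = nat (n + 2)"
    using right_lch[OF ma d1 n0] by auto
  have l2: "lch (rev ` snd ` R) (map (rev \<circ> snd) vs')" "concat (map (rev \<circ> snd) vs') = rev (snd w)" "length vs' = nat (n + 2)"
    using right_lch[OF ma d2 n0] by auto
  have ms: "map (rev \<circ> snd) vs = map (rev \<circ> snd) vs'"
    using cum_ech_eq[OF ma_S2r[OF ma] l1(1) l2(1)] l1 l2 by simp
  have ln: "length vs = length vs'" using l1 l2 by simp
  have sn: "\<And>j. j < length vs \<Longrightarrow> snd (vs ! j) = snd (vs' ! j)"
    using ms ln by (metis comp_apply nth_map rev_rev_ident)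
  have B1: "\<forall>j < length vs. vs ! j \<in> Bpaths Q R" and B2: "\<forall>j < length vs'. vs' ! j \<in> Bpaths Q R"
    and f1: "psrc w = psrc (vs ! 0)" and f2: "psrc w = psrc (vs' ! 0)"
    using d1 d2 n0 unfolding right_decomp_def by auto
  have ge1: "\<And>j. 1 \<le> j \<Longrightarrow> j < length vs \<Longrightarrow> vs ! j = vs' ! j"
  proof -
    fix j assume j: "1 \<le> j" "j < length vs"
    have "rev (snd (vs ! j)) \<noteq> []" using lch_ne[OF l1(1), of j] j by simp
    then have ne: "snd (vs ! j) \<noteq> []" by simp
    have "fst (vs ! j) = srcA Q (last (snd (vs ! j)))" using valid_fst'[OF Bp_valid[of _ Q R] ne] B1 j by simp
    moreover have ne': "snd (vs' ! j) \<noteq> []" using ne sn j by simp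
    moreover have "fst (vs' ! j) = srcA Q (last (snd (vs' ! j)))"
      using valid_fst'[OF Bp_valid[of _ Q R] ne'] B2 j ln by simp
    ultimately show "vs ! j = vs' ! j" using sn[OF j(2)] by (simp add: prod_eq_iff)
  qed
  have "2 \<le> length vs" using l1 n0 by simp
  have "fst (vs ! 0) = fst (vs' ! 0)" using f1 f2 unfolding psrc_def by simp
  then have u0: "vs ! 0 = vs' ! 0" using sn[of 0] \<open>2 \<le> length vs\<close> by (metis prod_eq_iff gr0I le_zero_eq zero_neq_numeral)
  show ?thesis
  proof (rule nth_equalityI)
    show "length vs = length vs'" using ln .
    fix j assume "j < length vs"
    then show "vs ! j = vs' ! j" using ge1 u0 by (cases "j = 0") auto
  qed
qed


definition sl :: "('v, 'a) quiver \<Rightarrow> ('v, 'a) path \<Rightarrow> nat \<Rightarrow> nat \<Rightarrow> ('v, 'a) path" where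
  "sl Q w k l = (ptgt Q (fst w, drop l (snd w)), slc (snd w) k l)"

lemma slc_drop_app: "a \<le> b \<Longrightarrow> slc x a b @ drop b x = drop a x"
proof -
  assume ab: "a \<le> b"
  have "drop b x = drop (b - a) (drop a x)" using ab by simp
  then show ?thesis unfolding slc_def by (metis append_take_drop_id)
qed

lemma drop_slc: "drop t (slc x a b) = slc x (a + t) b"
  unfolding slc_def by (simp add: drop_take add.commute diff_diff_left)

lemma length_slc: "a \<le> b \<Longrightarrow> b \<le> length x \<Longrightarrow> length (slc x a b) = b - a"
  unfolding slc_def by simp

lemma sl_valid:
  assumes ma: "monomial_algebra Q R" and vw: "valid Q w" and kl: "k \<le> l" "l \<le> length (snd w)"
  shows "valid Q (sl Q w k l)"
proof -
  have tg: "\<forall>\<alpha>\<in>arrs Q. tgtA Q \<alpha> \<in> verts Q" using ma_tg[OF ma] .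
  have "snd w = take k (snd w) @ drop k (snd w)" by simp
  also have "drop k (snd w) = slc (snd w) k l @ drop l (snd w)" using slc_drop_app[OF kl(1), of "snd w"] by (rule sym)
  finally have "valid Q (fst w, take k (snd w) @ (slc (snd w) k l @ drop l (snd w)))"
    using vw by (metis prod.collapse)
  then show ?thesis unfolding sl_def valid_append[OF tg] by blast
qed

lemma sl_comp:
  assumes ma: "monomial_algebra Q R" and vw: "valid Q w" and jkl: "j \<le> k" "k \<le> l" "l \<le> length (snd w)"
  shows "composable Q (sl Q w j k) (sl Q w k l) \<and> cat (sl Q w j k) (sl Q w k l) = sl Q w j l"
proof -
  have v1: "valid Q (sl Q w j k)" using sl_valid[OF ma vw] jkl by simp
  have v2: "valid Q (sl Q w k l)" using sl_valid[OF ma vw] jkl by simp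
  have "ptgt Q (sl Q w k l) = ptgt Q (fst w, slc (snd w) k l @ drop l (snd w))"
    unfolding sl_def by (simp add: ptgt_app)
  also have "\<dots> = ptgt Q (fst w, drop k (snd w))" using slc_drop_app[OF jkl(2), of "snd w"] by (simp only:)
  finally have pt: "ptgt Q (sl Q w k l) = psrc (sl Q w j k)" unfolding psrc_def sl_def by simp
  have "cat (sl Q w j k) (sl Q w k l) = sl Q w j l"
    unfolding cat_def sl_def using slc_split[OF jkl(1,2), of "snd w"] by simp
  then show ?thesis using v1 v2 pt unfolding composable_def by simp
qed

lemma sl_len: "k \<le> l \<Longrightarrow> l \<le> length (snd w) \<Longrightarrow> len (sl Q w k l) = l - k"
  unfolding len_def sl_def using length_slc by simp


lemma right_exists:
  assumes ma: "monomial_algebra Q R" and ld: "left_decomp Q R n p us" and n0: "0 \<le> n"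
  shows "\<exists>vs. right_decomp Q R n p vs"
proof -
  define S where "S = snd ` R"
  define x where "x = snd p"
  define L where "L = length x"
  define N where "N = nat n + 1"
  have l1: "lch S (map snd us)" "concat (map snd us) = x" "length us = nat (n + 2)"
    using left_lch[OF ma ld n0] unfolding S_def x_def by auto
  have S2: "\<forall>r\<in>S. 2 \<le> length r" using ma_S2[OF ma] unfolding S_def .
  have lenN: "length (map snd us) - 1 = N" using l1(3) n0 unfolding N_def by simp
  have eN0: "ech (occ S x) 0 N (\<lambda>i. cum (map snd us) i)"
    using lch_ech[OF l1(1), of x "[]" "[]"] S2 l1(2) lenN by simp
  have ne: "map snd us \<noteq> []" using l1(3) n0 by (cases us) auto
  have "cum (map snd us) N = length (concat (map snd us))" using cum_last[OF ne] lenN by simp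
  then have eNL: "cum (map snd us) N = L" using l1(2) unfolding L_def by simp
  have N1: "1 \<le> N" unfolding N_def by simp
  define P' where "P' = occ (rev ` S) (rev x)"
  define f where "f = fr P'"
  have rv: "ech P' 0 N f" "f N = L"
    using rev_ech[OF S2 eN0 _ N1] eNL unfolding P'_def f_def L_def by auto
  have fmono: "\<And>i j. i \<le> j \<Longrightarrow> j \<le> N \<Longrightarrow> f i \<le> f j" using ech_mono[OF rv(1)] by blast
  have fL: "\<And>i. i \<le> N \<Longrightarrow> f i \<le> L" using fmono[of _ N] rv(2) by simp
  have f0: "f 0 = 0" and f1: "f 1 = 1" using rv(1) unfolding ech_def by auto
  have fR: "\<And>i. i + 2 \<le> N \<Longrightarrow> P' (f i) (f (i + 2))"
    and fMin: "\<And>i k. i + 2 \<le> N \<Longrightarrow> k < f (i + 2) \<Longrightarrow> \<not> P' (f i) k"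
    and fB: "\<And>i. i < N \<Longrightarrow> \<not> P' (f i) (f (Suc i))"
    using rv(1) unfolding ech_def by auto
  have P'rev: "\<And>s k. P' s k \<longleftrightarrow> s \<le> k \<and> k \<le> L \<and> occ S x (L - k) (L - s)"
    unfolding P'_def L_def using occ_rev by blast
  have L1: "1 \<le> L" using fL[of 1] f1 N1 by simp
  have vp: "valid Q p" using ld unfolding left_decomp_def by simp
  have xl: "length (snd p) = L" unfolding L_def x_def by simp
  define vs where "vs = map (\<lambda>j. sl Q p (L - f j) (L - f (j - 1))) [0..<Suc N]"
  have lvs: "length vs = Suc N" unfolding vs_def by simp
  have vsj: "\<And>j. j < Suc N \<Longrightarrow> vs ! j = sl Q p (L - f j) (L - f (j - 1))"
    unfolding vs_def by (simp del: upt_Suc)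
  have ord: "\<And>j. j \<le> N \<Longrightarrow> L - f j \<le> L - f (j - 1) \<and> L - f (j - 1) \<le> L"
    using fmono by (simp add: diff_le_mono2)
  have sndvs: "\<And>j. j < Suc N \<Longrightarrow> snd (vs ! j) = slc x (L - f j) (L - f (j - 1))"
    using vsj unfolding sl_def x_def by simp
  have tel: "\<And>J. J \<le> N \<Longrightarrow> concat (map snd (rev (take (Suc J) vs))) = drop (L - f J) x"
  proof -
    fix J show "J \<le> N \<Longrightarrow> concat (map snd (rev (take (Suc J) vs))) = drop (L - f J) x"
    proof (induction J)
      case 0
      have "take (Suc 0) vs = [vs ! 0]" using lvs by (simp add: take_Suc_conv_app_nth)
      then show ?case using sndvs[of 0] f0 unfolding L_def slc_def by simp
    next
      case (Suc J)
      have a: "Suc J < length vs" using Suc.prems lvs by simp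
      have "take (Suc (Suc J)) vs = take (Suc J) vs @ [vs ! Suc J]" using a by (simp add: take_Suc_conv_app_nth)
      then have "concat (map snd (rev (take (Suc (Suc J)) vs))) = snd (vs ! Suc J) @ drop (L - f J) x"
        using Suc by simp
      also have "\<dots> = slc x (L - f (Suc J)) (L - f J) @ drop (L - f J) x" using sndvs[of "Suc J"] a lvs by simp
      also have "\<dots> = drop (L - f (Suc J)) x" using slc_drop_app ord[of "Suc J"] Suc.prems by simp
      finally show ?case .
    qed
  qed
  have conc: "snd p = concat (map snd (rev vs))"
    using tel[of N] rv(2) lvs unfolding x_def by simp
  have ps0: "psrc p = psrc (vs ! 0)" using vsj[of 0] f0 unfolding sl_def psrc_def ptgt_def L_def x_def by simp
  have comp: "\<forall>j. Suc j < length vs \<longrightarrow> composable Q (vs ! Suc j) (vs ! j)"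
  proof (intro allI impI)
    fix j assume a: "Suc j < length vs"
    have o1: "L - f (Suc j) \<le> L - f j" "L - f j \<le> L - f (j - 1)" "L - f (j - 1) \<le> length (snd p)"
      using ord[of "Suc j"] ord[of j] a lvs xl by auto
    show "composable Q (vs ! Suc j) (vs ! j)"
      using sl_comp[OF ma vp o1] vsj[of j] vsj[of "Suc j"] a lvs by simp
  qed
  have len0: "len (vs ! 0) = 0" using vsj[of 0] sl_len[of "L - f 0" "L - f 0" p Q] xl by simp
  have len1: "length vs > 1 \<longrightarrow> len (vs ! 1) = 1"
    using vsj[of 1] sl_len[of "L - f 1" "L - f 0" p Q] xl f0 f1 L1 N1 by simp
  have Bv: "\<forall>j < length vs. vs ! j \<in> Bpaths Q R"
  proof (intro allI impI)
    fix j assume a: "j < length vs"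
    have o1: "L - f j \<le> L - f (j - 1)" "L - f (j - 1) \<le> length (snd p)" using ord[of j] a lvs xl by auto
    have vv: "valid Q (vs ! j)" using sl_valid[OF ma vp o1] vsj[of j] a lvs by simp
    have "\<not> inI Q R (vs ! j)"
    proof
      assume "inI Q R (vs ! j)"
      then have "inW S (slc x (L - f j) (L - f (j - 1)))" using inI_inW sndvs[of j] a lvs unfolding S_def by fastforce
      then have oc: "occ S x (L - f j) (L - f (j - 1))" unfolding occ_def using o1 xl unfolding x_def by simp
      show False
      proof (cases j)
        case 0 then show False using occ_len[OF S2 oc] by simp
      next
        case (Suc j')
        have "P' (f j') (f j)" unfolding P'rev using oc Suc fmono[of j' j] fL[of j] a lvs by simp
        then show False using fB[of j'] Suc a lvs by simp
      qed
    qed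
    then show "vs ! j \<in> Bpaths Q R" unfolding Bpaths_def using vv by simp
  qed
  have Rel: "\<forall>i. i + 2 < length vs \<longrightarrow>
          inI Q R (cat (vs ! Suc (Suc i)) (vs ! Suc i))
          \<and> (\<forall>r. is_prefix Q r (cat (vs ! Suc (Suc i)) (vs ! Suc i))
                 \<and> r \<noteq> cat (vs ! Suc (Suc i)) (vs ! Suc i) \<longrightarrow> \<not> inI Q R r)"
  proof (rule allI, rule impI)
    fix i assume a: "i + 2 < length vs"
    have iN: "i + 2 \<le> N" using a lvs by simp
    define lo where "lo = L - f (i + 2)"
    define hi where "hi = L - f i"
    have o1: "L - f (Suc (Suc i)) \<le> L - f (Suc i)" "L - f (Suc i) \<le> L - f i" "L - f i \<le> length (snd p)"
      using ord[of "Suc (Suc i)"] ord[of "Suc i"] iN xl by auto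
    have ceq: "cat (vs ! Suc (Suc i)) (vs ! Suc i) = sl Q p lo hi"
      using sl_comp[OF ma vp o1] vsj[of "Suc i"] vsj[of "Suc (Suc i)"] iN unfolding lo_def hi_def by simp
    have lohi: "lo \<le> hi" "hi \<le> L" unfolding lo_def hi_def using o1 xl by auto
    have vc: "valid Q (sl Q p lo hi)" using sl_valid[OF ma vp] lohi xl by simp
    have pr: "P' (f i) (f (i + 2))" using fR iN by simp
    then have oc: "occ S x lo hi" unfolding P'rev lo_def hi_def by simp
    have i1: "inI Q R (sl Q p lo hi)"
      using inW_inI[OF ma vc] oc unfolding occ_def sl_def S_def x_def by simp
    have mn: "\<forall>r. is_prefix Q r (sl Q p lo hi) \<and> r \<noteq> sl Q p lo hi \<longrightarrow> \<not> inI Q R r"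
    proof (intro allI impI notI)
      fix r assume h: "is_prefix Q r (sl Q p lo hi) \<and> r \<noteq> sl Q p lo hi" and ir: "inI Q R r"
      obtain b where b: "composable Q b r" "sl Q p lo hi = cat b r" using h unfolding is_prefix_def by blast
      have bne: "snd b \<noteq> []"
      proof
        assume "snd b = []"
        then have "cat b r = r" unfolding cat_def by simp
        then show False using h b by simp
      qed
      define t where "t = length (snd b)"
      have t0: "0 < t" using bne unfolding t_def by simp
      have ssl: "snd (sl Q p lo hi) = snd b @ snd r" using b(2) unfolding cat_def by simp
      have "snd r = drop t (snd (sl Q p lo hi))" unfolding ssl t_def by simp
      then have sr: "snd r = slc x (lo + t) hi" unfolding sl_def x_def by (simp add: drop_slc)
      have "length (snd (sl Q p lo hi)) = hi - lo" unfolding sl_def using length_slc[OF lohi(1), of "snd p"] lohi(2) xl by simp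
      then have lt: "t \<le> hi - lo" unfolding ssl t_def by simp
      have "inW S (slc x (lo + t) hi)" using inI_inW[OF ir] sr unfolding S_def by simp
      then have "occ S x (lo + t) hi" unfolding occ_def using lt lohi unfolding L_def by simp
      moreover have le: "lo + t \<le> hi" using lt lohi by simp
      moreover have fiL: "f i \<le> L" using fL iN by simp
      ultimately have "P' (f i) (L - (lo + t))" unfolding P'rev using lohi unfolding hi_def
        by (simp; linarith)
      moreover have "L - (lo + t) < f (i + 2)" using t0 lt lohi fL[OF iN] unfolding lo_def hi_def by simp
      ultimately show False using fMin[OF iN] by blast
    qed
    show "inI Q R (cat (vs ! Suc (Suc i)) (vs ! Suc i))
          \<and> (\<forall>r. is_prefix Q r (cat (vs ! Suc (Suc i)) (vs ! Suc i))
                 \<and> r \<noteq> cat (vs ! Suc (Suc i)) (vs ! Suc i) \<longrightarrow> \<not> inI Q R r)"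
      using i1 mn ceq by simp
  qed
  have "right_decomp Q R n p vs"
    unfolding right_decomp_def using n0 lvs N_def vp conc ps0 comp len0 len1 Bv Rel by simp
  then show ?thesis by blast
qed


lemma inI_iff_W: assumes ma: "monomial_algebra Q R" and v: "valid Q w"
  shows "inI Q R w \<longleftrightarrow> inW (snd ` R) (snd w)"
proof
  assume "inI Q R w" then show "inW (snd ` R) (snd w)" by (rule inI_inW)
next
  assume "inW (snd ` R) (snd w)" then show "inI Q R w" by (rule inW_inI[OF ma v])
qed

lemma occ0_iff:
  assumes e: "ech (occ S x) 0 N e" and N2: "2 \<le> N" and c: "c \<le> length x"
  shows "occ S x 0 c \<longleftrightarrow> e 2 \<le> c"
proof -
  have ed: "e 0 = 0 \<and> e 1 = Suc 0 \<and> (\<forall>i. i + 2 \<le> N \<longrightarrow> occ S x (e i) (e (i + 2)) \<and> (\<forall>k < e (i + 2). \<not> occ S x (e i) k))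
     \<and> (\<forall>i < N. e i < e (Suc i) \<and> \<not> occ S x (e i) (e (Suc i)))" using e by (unfold ech_def)
  then have e0: "e 0 = 0" by (rule conjunct1)
  from ed have A: "\<forall>i. i + 2 \<le> N \<longrightarrow> occ S x (e i) (e (i + 2)) \<and> (\<forall>k < e (i + 2). \<not> occ S x (e i) k)"
    by (rule conjunct1[OF conjunct2[OF conjunct2]])
  then have A0: "occ S x (e 0) (e (0 + 2)) \<and> (\<forall>k < e (0 + 2). \<not> occ S x (e 0) k)" using N2 by simp
  then have o2: "occ S x 0 (e 2)" and mn: "\<forall>k < e 2. \<not> occ S x 0 k" using e0 by (simp_all add: numeral_2_eq_2)
  show ?thesis
  proof
    assume o: "occ S x 0 c"
    show "e 2 \<le> c"
    proof (rule ccontr)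
      assume "\<not> e 2 \<le> c"
      then have "c < e 2" by simp
      then show False using mn o by blast
    qed
  next
    assume le: "e 2 \<le> c"
    show "occ S x 0 c" using occ_mono_k[OF le c o2] .
  qed
qed

lemma part1:
  assumes ma: "monomial_algebra Q R"
    and dp: "left_decomp Q R (int nn) p us" and dq: "left_decomp Q R (int mm) q uq"
    and ev: "even mm" and mn: "mm < nn"
    and cb: "composable Q b (cat q a)"
    and eq: "cat p ahat = cat b (cat q a)"
  shows "(\<not> inI Q R b \<longleftrightarrow> len b + len q \<le> cum (map snd us) (mm + 2)) \<and> cum (map snd us) (mm + 2) \<le> len p"
proof -
  define S where "S = snd ` R"
  define x where "x = snd p @ snd ahat"
  have x2: "x = snd b @ snd q @ snd a" using eq unfolding x_def cat_def by simp
  have S2: "\<forall>r\<in>S. 2 \<le> length r" using ma_S2[OF ma] unfolding S_def .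
  have lp: "lch S (map snd us)" "concat (map snd us) = snd p" "length us = nn + 2"
    using left_lch[OF ma dp] unfolding S_def by auto
  have lq: "lch S (map snd uq)" "concat (map snd uq) = snd q" "length uq = mm + 2"
    using left_lch[OF ma dq] unfolding S_def by auto
  define e where "e = (\<lambda>i. cum (map snd us) i)"
  define d where "d = (\<lambda>i. length (snd b) + cum (map snd uq) i)"
  have ee: "ech (occ S x) 0 (nn + 1) e"
    using lch_ech[OF lp(1), of x "[]" "snd ahat"] S2 lp unfolding x_def e_def by simp
  have de: "ech (occ S x) (length (snd b)) (mm + 1) d"
    using lch_ech[OF lq(1), of x "snd b" "snd a"] S2 lq x2 unfolding d_def by simp
  obtain t where t: "mm = 2 * t" using ev by (rule evenE)
  have pa: "(e 2 \<le> length (snd b)) \<longleftrightarrow> \<not> (d (mm + 1) \<le> e (mm + 1 + 1))"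
    using part_abs[OF ee de monoS_occ, of t] t mn by simp
  have neq: "map snd uq \<noteq> []" using lq(3) by auto
  have dM: "d (mm + 1) = len b + len q"
    using cum_last[OF neq] lq unfolding d_def len_def by simp
  have vb: "valid Q b" using cb unfolding composable_def by simp
  have bx: "length (snd b) \<le> length x" using x2 by simp
  have n2: "2 \<le> nn + 1" using mn by simp
  have "inI Q R b \<longleftrightarrow> inW S (snd b)" using inI_iff_W[OF ma vb] unfolding S_def .
  also have "\<dots> \<longleftrightarrow> occ S x 0 (length (snd b))" unfolding occ_def slc_def using x2 by simp
  also have "\<dots> \<longleftrightarrow> e 2 \<le> length (snd b)" using occ0_iff[OF ee n2 bx] .
  finally have ib: "inI Q R b \<longleftrightarrow> e 2 \<le> length (snd b)" .
  have c1: "\<not> inI Q R b \<longleftrightarrow> len b + len q \<le> cum (map snd us) (mm + 2)"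
    using ib pa dM unfolding e_def by simp
  have nep: "map snd us \<noteq> []" using lp(3) by auto
  have "e (mm + 2) \<le> e (nn + 1)" using ech_mono[OF ee] mn by simp
  also have "e (nn + 1) = len p" using cum_last[OF nep] lp unfolding e_def len_def by simp
  finally show ?thesis using c1 unfolding e_def by simp
qed

lemma len_concat_rev: "length (concat (map snd (rev ws))) = length (concat (map (rev \<circ> snd) ws))"
  by (simp add: length_concat rev_map[symmetric] o_def)

lemma part2:
  assumes ma: "monomial_algebra Q R"
    and dp: "right_decomp Q R (int nn) p vs" and dq: "right_decomp Q R (int mm) q vq"
    and ev: "even mm" and mn: "mm < nn"
    and cq: "composable Q q a"
    and eq: "cat bhat p = cat b (cat q a)"
  shows "(\<not> inI Q R a \<longleftrightarrow> len a + len q \<le> cum (map (rev \<circ> snd) vs) (mm + 2))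
         \<and> cum (map (rev \<circ> snd) vs) (mm + 2) \<le> len p"
proof -
  define S where "S = rev ` snd ` R"
  define x where "x = rev (snd p) @ rev (snd bhat)"
  have x2: "x = rev (snd a) @ rev (snd q) @ rev (snd b)"
  proof -
    have "snd bhat @ snd p = snd b @ snd q @ snd a" using eq unfolding cat_def by simp
    then have "rev (snd bhat @ snd p) = rev (snd b @ snd q @ snd a)" by simp
    then show ?thesis unfolding x_def by simp
  qed
  have S2: "\<forall>r\<in>S. 2 \<le> length r" using ma_S2r[OF ma] unfolding S_def .
  have lp: "lch S (map (rev \<circ> snd) vs)" "concat (map (rev \<circ> snd) vs) = rev (snd p)" "length vs = nn + 2"
    using right_lch[OF ma dp] unfolding S_def by auto
  have lq: "lch S (map (rev \<circ> snd) vq)" "concat (map (rev \<circ> snd) vq) = rev (snd q)" "length vq = mm + 2"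
    using right_lch[OF ma dq] unfolding S_def by auto
  define e where "e = (\<lambda>i. cum (map (rev \<circ> snd) vs) i)"
  define d where "d = (\<lambda>i. length (snd a) + cum (map (rev \<circ> snd) vq) i)"
  have ee: "ech (occ S x) 0 (nn + 1) e"
    using lch_ech[OF lp(1), of x "[]" "rev (snd bhat)"] S2 lp unfolding x_def e_def by simp
  have de: "ech (occ S x) (length (snd a)) (mm + 1) d"
    using lch_ech[OF lq(1), of x "rev (snd a)" "rev (snd b)"] S2 lq x2 unfolding d_def by simp
  obtain t where t: "mm = 2 * t" using ev by (rule evenE)
  have pa: "(e 2 \<le> length (snd a)) \<longleftrightarrow> \<not> (d (mm + 1) \<le> e (mm + 1 + 1))"
    using part_abs[OF ee de monoS_occ, of t] t mn by simp
  have neq: "map (rev \<circ> snd) vq \<noteq> []" using lq(3) by auto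
  have dM: "d (mm + 1) = len a + len q"
    using cum_last[OF neq] lq unfolding d_def len_def by simp
  have va: "valid Q a" using cq unfolding composable_def by simp
  have ax: "length (snd a) \<le> length x" using x2 by simp
  have n2: "2 \<le> nn + 1" using mn by simp
  have "inI Q R a \<longleftrightarrow> inW (snd ` R) (snd a)" using inI_iff_W[OF ma va] .
  also have "\<dots> \<longleftrightarrow> inW S (rev (snd a))" unfolding S_def using inW_rev by metis
  also have "\<dots> \<longleftrightarrow> occ S x 0 (length (snd a))" unfolding occ_def slc_def using x2 by simp
  also have "\<dots> \<longleftrightarrow> e 2 \<le> length (snd a)" using occ0_iff[OF ee n2 ax] .
  finally have ia: "inI Q R a \<longleftrightarrow> e 2 \<le> length (snd a)" .
  have c1: "\<not> inI Q R a \<longleftrightarrow> len a + len q \<le> cum (map (rev \<circ> snd) vs) (mm + 2)"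
    using ia pa dM unfolding e_def by simp
  have nep: "map (rev \<circ> snd) vs \<noteq> []" using lp(3) by auto
  have "e (mm + 2) \<le> e (nn + 1)" using ech_mono[OF ee] mn by simp
  also have "e (nn + 1) = len p" using cum_last[OF nep] lp unfolding e_def len_def by simp
  finally show ?thesis using c1 unfolding e_def by simp
qed


lemma sigma_len:
  assumes ma: "monomial_algebra Q R" and d: "left_decomp Q R (int nn) p us"
  shows "len (sigma Q R (int nn) (int mm + 1) p) = cum (map snd us) (mm + 2)"
proof -
  have n0: "0 \<le> int nn" by simp
  have uniq: "\<And>us'. left_decomp Q R (int nn) p us' \<Longrightarrow> us' = us"
    using left_unique[OF ma _ d n0] by blast
  have th: "(THE us'. left_decomp Q R (int nn) p us') = us" by (rule the_equality[of "\<lambda>us'. left_decomp Q R (int nn) p us'" us, OF d uniq])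
  have nt: "nat (int mm + 1 + 2) = Suc (mm + 2)" by simp
  have "len (sigma Q R (int nn) (int mm + 1) p) = length (concat (map snd (take (Suc (mm + 2)) us)))"
    unfolding sigma_def Let_def th nt len_def by simp
  also have "\<dots> = cum (map snd us) (mm + 2)" unfolding cum_def take_map ..
  finally show ?thesis .
qed

lemma pi_len:
  assumes ma: "monomial_algebra Q R" and d: "right_decomp Q R (int nn) p vs"
  shows "len (pi_amb Q R (int nn) (int mm + 1) p) = cum (map (rev \<circ> snd) vs) (mm + 2)"
proof -
  have n0: "0 \<le> int nn" by simp
  have uniq: "\<And>vs'. right_decomp Q R (int nn) p vs' \<Longrightarrow> vs' = vs"
    using right_unique[OF ma _ d n0] by blast
  have th: "(THE vs'. right_decomp Q R (int nn) p vs') = vs" by (rule the_equality[of "\<lambda>vs'. right_decomp Q R (int nn) p vs'" vs, OF d uniq])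
  have nt: "nat (int mm + 1 + 2) = Suc (mm + 2)" by simp
  have "len (pi_amb Q R (int nn) (int mm + 1) p) = length (concat (map snd (rev (take (Suc (mm + 2)) vs))))"
    unfolding pi_amb_def Let_def th nt len_def by simp
  also have "\<dots> = length (concat (map (rev \<circ> snd) (take (Suc (mm + 2)) vs)))" by (rule len_concat_rev)
  also have "\<dots> = cum (map (rev \<circ> snd) vs) (mm + 2)" unfolding cum_def take_map ..
  finally show ?thesis .
qed

theorem mainTheorem8:
  fixes Q :: "('v, 'a) quiver" and R :: "('v, 'a) path set" and m n :: int
  assumes "monomial_algebra Q R"
    and "-1 \<le> m" and "even m" and "m < n"
  shows
   "(\<forall>p ahat b q a.
       p \<in> Gamma Q R n \<and> q \<in> Gamma Q R m
       \<and> composable Q p ahat \<and> composable Q q a \<and> composable Q b (cat q a)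
       \<and> cat p ahat = cat b (cat q a)
       \<longrightarrow> ((\<not> inI Q R b) \<longleftrightarrow> occ_inside (len b) q 0 (sigma Q R n (m + 1) p))
           \<and> (\<not> inI Q R b \<longrightarrow> occ_inside (len b) q 0 p))
  \<and> (\<forall>p bhat b q a.
       p \<in> Gamma Q R n \<and> q \<in> Gamma Q R m
       \<and> composable Q bhat p \<and> composable Q q a \<and> composable Q b (cat q a)
       \<and> cat bhat p = cat b (cat q a)
       \<longrightarrow> ((\<not> inI Q R a) \<longleftrightarrow>
              occ_inside (len b) q (len bhat + len p - len (pi_amb Q R n (m + 1) p))
                         (pi_amb Q R n (m + 1) p))
           \<and> (\<not> inI Q R a \<longrightarrow> occ_inside (len b) q (len bhat) p))"
proof -
  note ma = assms(1)
  have m0: "0 \<le> m"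
  proof (rule ccontr)
    assume "\<not> 0 \<le> m"
    then have "m = -1" using assms(2) by simp
    then show False using assms(3) by simp
  qed
  define mm where "mm = nat m"
  define nn where "nn = nat n"
  have mmi: "m = int mm" and nni: "n = int nn" using m0 assms(4) unfolding mm_def nn_def by simp_all
  have mn: "mm < nn" using assms(4) m0 unfolding mm_def nn_def by simp
  have ev: "even mm" using assms(3) mmi by simp
  have P1: "\<forall>p ahat b q a.
       p \<in> Gamma Q R n \<and> q \<in> Gamma Q R m
       \<and> composable Q p ahat \<and> composable Q q a \<and> composable Q b (cat q a)
       \<and> cat p ahat = cat b (cat q a)
       \<longrightarrow> ((\<not> inI Q R b) \<longleftrightarrow> occ_inside (len b) q 0 (sigma Q R n (m + 1) p))
           \<and> (\<not> inI Q R b \<longrightarrow> occ_inside (len b) q 0 p)"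
  proof (intro allI impI)
    fix p ahat b q a
    assume h: "p \<in> Gamma Q R n \<and> q \<in> Gamma Q R m
       \<and> composable Q p ahat \<and> composable Q q a \<and> composable Q b (cat q a)
       \<and> cat p ahat = cat b (cat q a)"
    obtain us where us: "left_decomp Q R (int nn) p us" using h nni unfolding Gamma_def by auto
    obtain uq where uq: "left_decomp Q R (int mm) q uq" using h mmi unfolding Gamma_def by auto
    have r: "(\<not> inI Q R b \<longleftrightarrow> len b + len q \<le> cum (map snd us) (mm + 2)) \<and> cum (map snd us) (mm + 2) \<le> len p"
      using part1[OF ma us uq ev mn] h by blast
    have sl: "len (sigma Q R n (m + 1) p) = cum (map snd us) (mm + 2)"
      using sigma_len[OF ma us, of mm] nni mmi by simp
    show "((\<not> inI Q R b) \<longleftrightarrow> occ_inside (len b) q 0 (sigma Q R n (m + 1) p))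
           \<and> (\<not> inI Q R b \<longrightarrow> occ_inside (len b) q 0 p)"
      unfolding occ_inside_def sl using r by auto
  qed
  have P2: "\<forall>p bhat b q a.
       p \<in> Gamma Q R n \<and> q \<in> Gamma Q R m
       \<and> composable Q bhat p \<and> composable Q q a \<and> composable Q b (cat q a)
       \<and> cat bhat p = cat b (cat q a)
       \<longrightarrow> ((\<not> inI Q R a) \<longleftrightarrow>
              occ_inside (len b) q (len bhat + len p - len (pi_amb Q R n (m + 1) p))
                         (pi_amb Q R n (m + 1) p))
           \<and> (\<not> inI Q R a \<longrightarrow> occ_inside (len b) q (len bhat) p)"
  proof (intro allI impI)
    fix p bhat b q a
    assume h: "p \<in> Gamma Q R n \<and> q \<in> Gamma Q R m
       \<and> composable Q bhat p \<and> composable Q q a \<and> composable Q b (cat q a)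
       \<and> cat bhat p = cat b (cat q a)"
    obtain us where us: "left_decomp Q R (int nn) p us" using h nni unfolding Gamma_def by auto
    obtain uq where uq: "left_decomp Q R (int mm) q uq" using h mmi unfolding Gamma_def by auto
    obtain vs where vs: "right_decomp Q R (int nn) p vs" using right_exists[OF ma us] by auto
    obtain vq where vq: "right_decomp Q R (int mm) q vq" using right_exists[OF ma uq] by auto
    define C where "C = cum (map (rev \<circ> snd) vs) (mm + 2)"
    have r: "(\<not> inI Q R a \<longleftrightarrow> len a + len q \<le> C) \<and> C \<le> len p"
      using part2[OF ma vs vq ev mn] h unfolding C_def by blast
    have pl: "len (pi_amb Q R n (m + 1) p) = C"
      using pi_len[OF ma vs, of mm] nni mmi unfolding C_def by simp
    have "length (snd bhat @ snd p) = length (snd b @ snd q @ snd a)"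
      using h unfolding cat_def by simp
    then have lens: "len bhat + len p = len b + len q + len a" unfolding len_def by simp
    show "((\<not> inI Q R a) \<longleftrightarrow>
              occ_inside (len b) q (len bhat + len p - len (pi_amb Q R n (m + 1) p))
                         (pi_amb Q R n (m + 1) p))
           \<and> (\<not> inI Q R a \<longrightarrow> occ_inside (len b) q (len bhat) p)"
      unfolding occ_inside_def pl using r lens by auto
  qed
  show ?thesis using P1 P2 by blast
qed


end
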